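(* Let $\lambda_1\ge0$ and $\lambda_2=0$, let $P_n$ be the monic polynomials orthogonal with respect to $\langle f,g\rangle_F=\int_{\mathbb R}fg\,e^{-x^4}dx$ and $Q_n$ the monic polynomials orthogonal with respect to $\langle f,g\rangle_S=\int_{\mathbb R}fg\,e^{-x^4}dx+\lambda_1f(0)g(0)$. Then every $Q_n$ has all its zeros real and simple, and for $n\ge3$ the positive zeros of $Q_n$ interlace with the positive zeros of $P_n$.
   Context: Both $P_n$ and $Q_n$ have the parity of $n$, so they have the same number $m=\lfloor n/2\rfloor$ of positive zeros. If $0<x_1<\dots<x_m$ are the positive zeros of $P_n$ and $0<y_1<\dots<y_m$ those of $Q_n$, "interlace" means that either $y_1\le x_1\le y_2\le x_2\le\dots\le y_m\le x_m$ or $x_1\le y_1\le x_2\le y_2\le\dots\le x_m\le y_m$. *)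

theory Defs
  imports "HOL-Analysis.Analysis" "HOL-Computational_Algebra.Polynomial"
begin

definition freud_ip :: "real poly \<Rightarrow> real poly \<Rightarrow> real" where
  "freud_ip p q = (\<integral>x. poly p x * poly q x * exp (- (x ^ 4)) \<partial>lborel)"

definition sobolev_ip :: "real \<Rightarrow> real poly \<Rightarrow> real poly \<Rightarrow> real" where
  "sobolev_ip lam1 p q = freud_ip p q + lam1 * poly p 0 * poly q 0"

definition monic_OPS :: "(real poly \<Rightarrow> real poly \<Rightarrow> real) \<Rightarrow> (nat \<Rightarrow> real poly) \<Rightarrow> bool" where
  "monic_OPS ip P \<longleftrightarrow>
     (\<forall>n. degree (P n) = n \<and> lead_coeff (P n) = 1 \<and>
          (\<forall>q. degree q < n \<longrightarrow> ip (P n) q = 0))"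

definition pos_zeros :: "real poly \<Rightarrow> real list" where
  "pos_zeros p = sorted_list_of_set {x. 0 < x \<and> poly p x = 0}"

definition interlace :: "real list \<Rightarrow> real list \<Rightarrow> bool" where
  "interlace xs ys \<longleftrightarrow> length xs = length ys \<and>
     ((\<forall>i<length xs. ys ! i \<le> xs ! i \<and> (Suc i < length xs \<longrightarrow> xs ! i \<le> ys ! Suc i)) \<or>
      (\<forall>i<length xs. xs ! i \<le> ys ! i \<and> (Suc i < length xs \<longrightarrow> ys ! i \<le> xs ! Suc i)))"

end

theory Submission imports Defs "HOL-Probability.Distributions" begin

lemma integrable_pow_w: "integrable lborel (\<lambda>x::real. x ^ k * exp (- (x ^ 4)))"
proof (rule Bochner_Integration.integrable_bound)
  show "integrable lborel (\<lambda>x. (exp (1/16) * sqrt (2*pi)) * (std_normal_density x * \<bar>x\<bar>^k))"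
    by (intro integrable_mult_right integrable_std_normal_moment_abs)
  show "(\<lambda>x::real. x ^ k * exp (- (x ^ 4))) \<in> borel_measurable lborel" by simp
  show "AE x in lborel. norm (x ^ k * exp (- (x ^ 4))) \<le> norm ((exp (1/16) * sqrt (2*pi)) * (std_normal_density x * \<bar>x\<bar>^k))"
  proof (rule AE_I2)
    fix x :: real
    have "(x^2 - 1/4)^2 \<ge> 0" by simp
    hence "- (x^4) \<le> 1/16 + (- x\<^sup>2 / 2)" by (simp add: power2_eq_square algebra_simps power4_eq_xxxx)
    hence e: "exp (- (x ^ 4)) \<le> exp (1/16) * exp (- x\<^sup>2 / 2)" by (simp add: exp_add[symmetric])
    have "norm (x ^ k * exp (- (x ^ 4))) = \<bar>x\<bar>^k * exp (- (x ^ 4))" by (simp add: abs_mult power_abs)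
    also have "\<dots> \<le> \<bar>x\<bar>^k * (exp (1/16) * exp (- x\<^sup>2 / 2))" by (intro mult_left_mono e) simp
    also have "\<dots> = (exp (1/16) * sqrt (2*pi)) * (std_normal_density x * \<bar>x\<bar>^k)"
      by (simp add: std_normal_density_def)
    also have "\<dots> = norm ((exp (1/16) * sqrt (2*pi)) * (std_normal_density x * \<bar>x\<bar>^k))"
      by (simp add: abs_mult normal_density_nonneg)
    finally show "norm (x ^ k * exp (- (x ^ 4))) \<le> norm ((exp (1/16) * sqrt (2*pi)) * (std_normal_density x * \<bar>x\<bar>^k))" .
  qed
qed

lemma integrable_poly_w: "integrable lborel (\<lambda>x::real. poly p x * exp (- (x ^ 4)))"
proof -
  have "(\<lambda>x::real. poly p x * exp (- (x ^ 4))) = (\<lambda>x. \<Sum>i\<le>degree p. coeff p i * (x ^ i * exp (- (x ^ 4))))"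
    by (simp add: poly_altdef sum_distrib_right mult.assoc)
  moreover have "integrable lborel (\<lambda>x. \<Sum>i\<le>degree p. coeff p i * (x ^ i * exp (- (x ^ 4))))"
    by (rule Bochner_Integration.integrable_sum, rule integrable_mult_right, rule integrable_pow_w)
  ultimately show ?thesis by simp
qed

definition II :: "real poly \<Rightarrow> real" where
  "II p = (\<integral>x. poly p x * exp (- (x ^ 4)) \<partial>lborel)"

lemma II_add: "II (p + q) = II p + II q"
  unfolding II_def by (simp add: distrib_right integrable_poly_w)

lemma II_smult: "II (smult c p) = c * II p"
  unfolding II_def by (simp add: mult.assoc)

lemma II_pos:
  assumes nn: "\<And>x. poly p x \<ge> 0" and p: "p \<noteq> 0"
  shows "II p > 0"
proof -
  have int: "integrable lborel (\<lambda>x::real. poly p x * exp (- (x ^ 4)))" by (rule integrable_poly_w)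
  have ge: "II p \<ge> 0" unfolding II_def by (intro integral_nonneg_AE AE_I2) (simp add: nn)
  have "II p \<noteq> 0"
  proof
    assume "II p = 0"
    hence "AE x in lborel. poly p x * exp (- (x ^ 4)) = 0"
      using integral_nonneg_eq_0_iff_AE[OF int] nn unfolding II_def by simp
    hence A1: "AE x in lborel. poly p x = 0" by simp
    have fin: "finite {x. poly p x = 0}" using poly_roots_finite[OF p] .
    have A2: "AE x in lborel. x \<notin> {x. poly p x = 0}"
      by (rule AE_discrete_difference) (auto intro: countable_finite[OF fin])
    have "AE x in lborel. (x::real) \<noteq> x" using A1 A2 by eventually_elim auto
    hence "emeasure lborel {x\<in>space lborel. (x::real) = x} = 0" by (rule emeasure_eq_0_AE)
    thus False by simp
  qed
  with ge show ?thesis by simp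
qed

lemma II_refl: "II (pcompose p [:0,-1:]) = II p"
proof -
  have "II p = \<bar>-1\<bar> *\<^sub>R (\<integral>x. poly p (0 + -1 * x) * exp (- ((0 + -1 * x) ^ 4)) \<partial>lborel)"
    unfolding II_def by (rule lborel_integral_real_affine) simp
  thus ?thesis unfolding II_def by (simp add: poly_pcompose)
qed


declare mult_pCons_left [simp del] mult_pCons_right [simp del]

abbreviation lin :: "real \<Rightarrow> real poly" where "lin r \<equiv> [:-r, 1:]"

definition pr :: "real set \<Rightarrow> real poly" where "pr R = (\<Prod>r\<in>R. lin r)"

lemma poly_pr: "poly (pr R) x = (\<Prod>r\<in>R. x - r)"
  unfolding pr_def by (simp add: poly_prod)

lemma pr_nz: "pr R \<noteq> 0"
  unfolding pr_def by (cases "finite R") (auto simp: prod_zero_iff)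

lemma degree_pr: "finite R \<Longrightarrow> degree (pr R) = card R"
  unfolding pr_def by (subst degree_prod_eq_sum_degree) auto

lemma lead_pr: "lead_coeff (pr R) = 1"
  unfolding pr_def by (simp add: lead_coeff_prod)

lemma poly_pr_zero: "finite R \<Longrightarrow> poly (pr R) x = 0 \<longleftrightarrow> x \<in> R"
  by (simp add: poly_pr)

lemma pr_insert: "finite R \<Longrightarrow> r \<notin> R \<Longrightarrow> pr (insert r R) = lin r * pr R"
  by (simp add: pr_def)

lemma pr_dvd:
  assumes "finite R" "\<And>r. r \<in> R \<Longrightarrow> poly p r = 0"
  shows "pr R dvd p"
  using assms
proof (induction R rule: finite_induct)
  case empty then show ?case by (simp add: pr_def)
next
  case (insert r R)
  then obtain g where g: "p = pr R * g" by (auto elim: dvdE)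
  have "poly (pr R) r \<noteq> 0" using insert by (simp add: poly_pr_zero)
  moreover have "poly p r = 0" using insert by simp
  ultimately have "poly g r = 0" using g by simp
  then obtain h where "g = lin r * h" by (metis dvdE poly_eq_0_iff_dvd)
  hence "p = pr (insert r R) * h" using g insert by (simp add: pr_insert ac_simps del: mult_pCons_left)
  thus ?case by simp
qed

lemma sign_pr:
  assumes "finite R" "t \<notin> R"
  shows "0 < (-1) ^ card {r\<in>R. t < r} * poly (pr R) t"
  using assms
proof (induction R rule: finite_induct)
  case empty then show ?case by (simp add: pr_def)
next
  case (insert r R)
  have IH: "0 < (-1) ^ card {r\<in>R. t < r} * poly (pr R) t" using insert by simp
  have tr: "t \<noteq> r" using insert by simp
  show ?case
  proof (cases "t < r")
    case True
    have "{r'\<in>insert r R. t < r'} = insert r {r\<in>R. t < r}" using True by auto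
    hence "card {r'\<in>insert r R. t < r'} = Suc (card {r\<in>R. t < r})" using insert by simp
    moreover have "poly (pr (insert r R)) t = (t - r) * poly (pr R) t" using insert by (simp add: poly_pr)
    ultimately show ?thesis using IH True by (simp add: mult_neg_pos mult.left_commute)
  next
    case False
    have "{r'\<in>insert r R. t < r'} = {r\<in>R. t < r}" using False by auto
    moreover have "poly (pr (insert r R)) t = (t - r) * poly (pr R) t" using insert by (simp add: poly_pr)
    ultimately show ?thesis using IH False tr by (simp add: mult.left_commute)
  qed
qed

lemma sign_decomp:
  fixes p :: "real poly"
  shows "p \<noteq> 0 \<Longrightarrow> \<exists>R. finite R \<and> (\<forall>r\<in>R. poly p r = 0) \<and>
           ((\<forall>x. 0 \<le> poly (p * pr R) x) \<or> (\<forall>x. poly (p * pr R) x \<le> 0))"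
proof (induction "degree p" arbitrary: p rule: less_induct)
  case less
  show ?case
  proof (cases "\<exists>r. poly p r = 0")
    case False
    have "(\<forall>x. 0 \<le> poly p x) \<or> (\<forall>x. poly p x \<le> 0)"
    proof (rule ccontr)
      assume "\<not> ?thesis"
      then obtain a b where a: "poly p a < 0" and b: "poly p b > 0" by (auto simp: not_le)
      hence "a \<noteq> b" by auto
      then consider "a < b" | "b < a" by linarith
      thus False
      proof cases
        case 1 thus False using poly_IVT_pos[OF 1 a b] False by auto
      next
        case 2 thus False using poly_IVT_neg[OF 2 b a] False by auto
      qed
    qed
    thus ?thesis by (intro exI[of _ "{}"]) (auto simp: pr_def)
  next
    case True
    then obtain r where r: "poly p r = 0" by auto
    then obtain q where q: "p = lin r * q" by (metis dvdE poly_eq_0_iff_dvd)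
    have qnz: "q \<noteq> 0" using q less.prems by auto
    have "degree p = Suc (degree q)" using q qnz by (simp add: degree_mult_eq del: mult_pCons_left)
    hence "degree q < degree p" by simp
    from less.hyps[OF this qnz] obtain R where R: "finite R" "\<forall>r\<in>R. poly q r = 0"
      "(\<forall>x. 0 \<le> poly (q * pr R) x) \<or> (\<forall>x. poly (q * pr R) x \<le> 0)" by blast
    have roots: "\<forall>r'\<in>R. poly p r' = 0" using R(2) q by simp
    show ?thesis
    proof (cases "r \<in> R")
      case True
      have "pr R = lin r * pr (R - {r})" using True R(1) unfolding pr_def by (simp add: prod.remove)
      hence "p * pr (R - {r}) = q * pr R" using q by (simp add: ac_simps del: mult_pCons_left)
      thus ?thesis using R roots by (intro exI[of _ "R - {r}"]) auto
    next
      case False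
      have e: "\<And>x. poly (p * pr (insert r R)) x = (x - r)^2 * poly (q * pr R) x"
        using q False R(1) by (simp add: pr_insert power2_eq_square ac_simps)
      have "(\<forall>x. 0 \<le> poly (p * pr (insert r R)) x) \<or> (\<forall>x. poly (p * pr (insert r R)) x \<le> 0)"
        using R(3) unfolding e by (auto intro: mult_nonneg_nonneg mult_nonneg_nonpos)
      thus ?thesis using R roots r by (intro exI[of _ "insert r R"]) auto
    qed
  qed
qed

lemma sym_card:
  fixes S :: "real set"
  assumes "finite S" "\<And>r. r \<in> S \<Longrightarrow> -r \<in> S" "0 \<notin> S"
  shows "card S = 2 * card {r\<in>S. 0 < r}"
proof -
  let ?P = "{r\<in>S. 0 < r}"
  have "S = ?P \<union> uminus ` ?P"
  proof safe
    fix x assume "x \<in> S" "x \<notin> uminus ` ?P"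
    hence "\<not> (0 < -x)" using assms(2)[of x] by (metis (mono_tags, lifting) image_eqI mem_Collect_eq minus_minus)
    thus "0 < x" using assms(3) \<open>x \<in> S\<close> by (cases "x = 0") auto
  qed (auto intro: assms(2))
  moreover have "?P \<inter> uminus ` ?P = {}" by auto
  moreover have "card (uminus ` ?P) = card ?P" by (rule card_image) (simp add: inj_on_def)
  ultimately show ?thesis using assms(1)
    by (metis (no_types, lifting) card_Un_disjoint finite_Un mult_2)
qed


locale pfun =
  fixes F :: "real poly \<Rightarrow> real"
  assumes F_add: "F (p + q) = F p + F q"
    and F_smult: "F (smult c p) = c * F p"
    and F_pos: "(\<And>x. 0 \<le> poly p x) \<Longrightarrow> p \<noteq> 0 \<Longrightarrow> 0 < F p"
    and F_refl: "F (pcompose p [:0,-1:]) = F p"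
begin

lemma F_zero: "F 0 = 0"
  using F_smult[of 0 0] by simp

lemma F_minus: "F (- p) = - F p"
  using F_smult[of "-1" p] by simp

lemma F_diff: "F (p - q) = F p - F q"
  using F_add[of p "-q"] F_minus[of q] by simp

lemma F_sum: "F (\<Sum>i\<in>S. f i) = (\<Sum>i\<in>S. F (f i))"
  by (induction S rule: infinite_finite_induct) (auto simp: F_zero F_add)

lemma F_neg: "(\<And>x. poly p x \<le> 0) \<Longrightarrow> p \<noteq> 0 \<Longrightarrow> F p < 0"
  using F_pos[of "-p"] F_minus[of p] by simp

lemma F_sq_pos: "p \<noteq> 0 \<Longrightarrow> 0 < F (p * p)"
  by (rule F_pos) auto

definition ops :: "nat \<Rightarrow> real poly \<Rightarrow> bool" where
  "ops n A \<longleftrightarrow> degree A = n \<and> lead_coeff A = 1 \<and> (\<forall>q. degree q < n \<longrightarrow> F (A * q) = 0)"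

lemma ops_unique:
  assumes A: "ops n A" and B: "ops n B" shows "A = B"
proof (rule ccontr)
  assume ne: "A \<noteq> B"
  let ?D = "A - B"
  have Dnz: "?D \<noteq> 0" using ne by simp
  have "degree ?D \<le> n" using A B degree_diff_le_max[of A B] unfolding ops_def by simp
  moreover have "coeff ?D n = 0" using A B unfolding ops_def by (metis coeff_diff diff_self)
  ultimately have "degree ?D < n" using Dnz by (metis le_neq_implies_less leading_coeff_0_iff)
  hence "F (A * ?D) = 0" "F (B * ?D) = 0" using A B unfolding ops_def by auto
  hence "F (?D * ?D) = 0" by (simp add: left_diff_distrib F_diff)
  with F_sq_pos[OF Dnz] show False by simp
qed

lemma ops_roots:
  assumes A: "ops n A" shows "\<exists>R. finite R \<and> card R = n \<and> A = pr R"
proof -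
  have Anz: "A \<noteq> 0" using A unfolding ops_def by auto
  obtain R where R: "finite R" "\<forall>r\<in>R. poly A r = 0"
     "(\<forall>x. 0 \<le> poly (A * pr R) x) \<or> (\<forall>x. poly (A * pr R) x \<le> 0)"
    using sign_decomp[OF Anz] by blast
  have nz: "A * pr R \<noteq> 0" using Anz pr_nz by simp
  have ge: "card R \<ge> n"
  proof (rule ccontr)
    assume "\<not> ?thesis"
    hence "degree (pr R) < n" using degree_pr[OF R(1)] by simp
    hence "F (A * pr R) = 0" using A unfolding ops_def by auto
    moreover have "F (A * pr R) \<noteq> 0" using R(3) F_pos[OF _ nz] F_neg[OF _ nz] by force
    ultimately show False by simp
  qed
  have "pr R dvd A" using pr_dvd[OF R(1)] R(2) by blast
  then obtain g where g: "A = pr R * g" by (rule dvdE)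
  have gnz: "g \<noteq> 0" using g Anz by auto
  have "n = card R + degree g" using g A gnz pr_nz unfolding ops_def by (simp add: degree_mult_eq degree_pr[OF R(1)])
  hence dg: "degree g = 0" "card R = n" using ge by auto
  have "lead_coeff g = 1" using g A unfolding ops_def by (simp add: lead_coeff_mult lead_pr)
  hence "g = 1" using dg by (metis leading_coeff_0_iff one_poly_eq_simps(1) pCons_0_0 degree_0_id)
  thus ?thesis using g dg R(1) by auto
qed

lemma ops_refl:
  assumes A: "ops n A" shows "pcompose A [:0,-1:] = smult ((-1)^n) A"
proof -
  let ?r = "[:0,-1::real:]"
  let ?A' = "smult ((-1)^n) (pcompose A ?r)"
  have rr: "\<And>q. pcompose (pcompose q ?r) ?r = q"
  proof -
    fix q :: "real poly"
    have "pcompose ?r ?r = [:0,1:]" by (simp add: pcompose_pCons mult_pCons_left)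
    thus "pcompose (pcompose q ?r) ?r = q" by (simp add: pcompose_assoc[symmetric] pcompose_idR)
  qed
  have "ops n ?A'"
    unfolding ops_def
  proof (intro conjI allI impI)
    show "degree ?A' = n" using A unfolding ops_def by (simp add: degree_pcompose)
    have d: "degree (pcompose A ?r) = n" using A unfolding ops_def by (simp add: degree_pcompose)
    have "lead_coeff (pcompose A ?r) = (-1)^n" using A unfolding ops_def by (subst lead_coeff_comp) auto
    thus "lead_coeff ?A' = 1" using d by (simp add: power_mult_distrib[symmetric])
    fix q :: "real poly" assume q: "degree q < n"
    have "?A' * q = smult ((-1)^n) (pcompose (A * pcompose q ?r) ?r)"
      by (simp add: pcompose_mult rr)
    hence "F (?A' * q) = (-1)^n * F (A * pcompose q ?r)" by (simp add: F_smult F_refl)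
    also have "F (A * pcompose q ?r) = 0" using A q unfolding ops_def by (simp add: degree_pcompose)
    finally show "F (?A' * q) = 0" by simp
  qed
  hence "?A' = A" using ops_unique A by blast
  hence "smult ((-1)^n) ?A' = smult ((-1)^n) A" by simp
  thus ?thesis by (simp add: power_mult_distrib[symmetric])
qed

lemma ops_even:
  assumes A: "ops n A" shows "poly A (-x) = (-1)^n * poly A x"
proof -
  have "poly (pcompose A [:0,-1:]) x = poly (smult ((-1)^n) A) x" using ops_refl[OF A] by simp
  thus ?thesis by (simp add: poly_pcompose)
qed

definition wt :: "real set \<Rightarrow> real \<Rightarrow> real" where
  "wt R a = F (pr (R - {a})) / poly (pr (R - {a})) a"

lemma quadrature:
  assumes A: "ops n A" and AR: "A = pr R" and fin: "finite R" and n: "n \<ge> 1"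
    and df: "degree f < 2 * n"
  shows "F f = (\<Sum>a\<in>R. poly f a * wt R a)"
proof -
  have cR: "card R = n" using A AR fin unfolding ops_def by (simp add: degree_pr)
  define q where "q a = pr (R - {a})" for a
  have qa: "poly (q a) a \<noteq> 0" for a using fin by (simp add: q_def poly_pr_zero)
  have qb: "poly (q a) b = 0" if "b \<in> R" "b \<noteq> a" for a b using fin that by (simp add: q_def poly_pr_zero)
  have dq: "degree (q a) < n" if "a \<in> R" for a using fin that cR n by (simp add: q_def degree_pr card_Diff_singleton)
  define S where "S = (\<Sum>a\<in>R. smult (poly f a / poly (q a) a) (q a))"
  define g where "g = f - S"
  have dS: "degree S < n" unfolding S_def using n
    by (intro le_less_trans[OF degree_sum_le[OF fin, of _ "n - 1"]]) (auto intro: order.trans[OF degree_smult_le] dest: dq)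
  have "\<forall>r\<in>R. poly g r = 0"
  proof
    fix r assume r: "r \<in> R"
    have "poly S r = (\<Sum>a\<in>R. poly f a / poly (q a) a * poly (q a) r)" unfolding S_def by (simp add: poly_sum)
    also have "\<dots> = poly f r / poly (q r) r * poly (q r) r + (\<Sum>a\<in>R-{r}. poly f a / poly (q a) a * poly (q a) r)"
      by (rule sum.remove[OF fin r])
    also have "(\<Sum>a\<in>R-{r}. poly f a / poly (q a) a * poly (q a) r) = 0"
      by (rule sum.neutral) (auto simp: qb r)
    finally show "poly g r = 0" using qa[of r] unfolding g_def by simp
  qed
  hence "A dvd g" using pr_dvd[OF fin] AR by blast
  then obtain h where h: "g = A * h" by (rule dvdE)
  have "F g = 0"
  proof (cases "h = 0")
    case True thus ?thesis using h F_zero by simp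
  next
    case False
    have "degree g < 2 * n" unfolding g_def using df dS n
      by (intro le_less_trans[OF degree_diff_le_max]) auto
    moreover have "A \<noteq> 0" using A unfolding ops_def by auto
    moreover have "degree g = n + degree h" using h False A \<open>A \<noteq> 0\<close> unfolding ops_def by (auto simp: degree_mult_eq)
    ultimately have "degree h < n" by simp
    thus ?thesis using A h unfolding ops_def by auto
  qed
  hence "F f = F S" unfolding g_def by (simp add: F_diff)
  also have "\<dots> = (\<Sum>a\<in>R. poly f a * wt R a)" unfolding S_def wt_def q_def by (simp add: F_sum F_smult)
  finally show ?thesis .
qed

end

lemma sorted_count:
  fixes ys :: "real list"
  assumes s: "sorted_wrt (<) ys" and j: "j < length ys"
  shows "ys ! j < t \<longleftrightarrow> j < card {y\<in>set ys. y < t}"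
proof -
  have d: "distinct ys" using s by (simp add: strict_sorted_iff)
  have le: "ys ! i \<le> ys ! k" if "i \<le> k" "k < length ys" for i k
    using sorted_wrt_nth_less[OF s, of i k] that by (cases "i = k") auto
  let ?I = "{i. i < length ys \<and> ys ! i < t}"
  have "{y\<in>set ys. y < t} = (\<lambda>i. ys ! i) ` ?I" by (auto simp: in_set_conv_nth)
  moreover have "inj_on (\<lambda>i. ys ! i) ?I" using d by (auto simp: inj_on_def nth_eq_iff_index_eq)
  ultimately have c: "card {y\<in>set ys. y < t} = card ?I" by (simp add: card_image)
  show ?thesis
  proof
    assume "ys ! j < t"
    hence "{..j} \<subseteq> ?I"
    proof (intro subsetI)
      fix i assume "i \<in> {..j}" hence "i \<le> j" by simp
      thus "i \<in> ?I" using le[of i j] j \<open>ys ! j < t\<close> by simp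
    qed
    hence "card {..j} \<le> card ?I" by (intro card_mono) auto
    thus "j < card {y\<in>set ys. y < t}" using c by simp
  next
    assume a: "j < card {y\<in>set ys. y < t}"
    show "ys ! j < t"
    proof (rule ccontr)
      assume "\<not> ys ! j < t"
      hence "?I \<subseteq> {..<j}"
      proof (intro subsetI)
        fix i assume "i \<in> ?I" and nj: "\<not> ys ! j < t"
        hence i: "i < length ys" "ys ! i < t" by auto
        show "i \<in> {..<j}"
        proof (rule ccontr)
          assume "i \<notin> {..<j}" hence "j \<le> i" by simp
          thus False using le[of j i] i nj by simp
        qed
      qed
      hence "card ?I \<le> j" by (metis card_lessThan card_mono finite_lessThan)
      thus False using a c by simp
    qed
  qed
qed

lemma interlace_refl:
  assumes "sorted xs" shows "interlace xs xs"
  unfolding interlace_def using assms by (auto simp: sorted_iff_nth_mono)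

lemma interlace_count:
  fixes xs ys :: "real list"
  assumes sx: "sorted_wrt (<) xs" and sy: "sorted_wrt (<) ys"
    and lx: "length xs = m" and ly: "length ys = m"
    and gap: "\<And>i. Suc i < m \<Longrightarrow> card {y\<in>set ys. y < xs ! i} < card {y\<in>set ys. y < xs ! Suc i}
        \<and> odd (card {y\<in>set ys. y < xs ! Suc i} - card {y\<in>set ys. y < xs ! i})"
  shows "interlace xs ys"
proof (cases "m = 0")
  case True thus ?thesis using lx ly by (simp add: interlace_def)
next
  case False
  define N where "N i = card {y\<in>set ys. y < xs ! i}" for i
  have mono: "N i + (j - i) \<le> N j \<and> even (N j - N i - (j - i))" if "i \<le> j" "j < m" for i j
    using that
  proof (induction j)
    case 0 thus ?case by simp
  next
    case (Suc j)
    show ?case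
    proof (cases "i = Suc j")
      case True thus ?thesis by simp
    next
      case False
      hence IH: "N i + (j - i) \<le> N j \<and> even (N j - N i - (j - i))" using Suc by auto
      have g: "N j < N (Suc j)" "odd (N (Suc j) - N j)" using gap[of j] Suc.prems unfolding N_def by auto
      have "N i + (Suc j - i) \<le> N (Suc j)" using IH g False Suc.prems by auto
      moreover have "even (N (Suc j) - N i - (Suc j - i))"
      proof -
        have e1: "N (Suc j) - N i - (Suc j - i) = (N j - N i - (j - i)) + (N (Suc j) - N j - 1)"
          using IH g False Suc.prems by auto
        show ?thesis unfolding e1 using IH g by auto
      qed
      ultimately show ?thesis by simp
    qed
  qed
  have top: "N (m - 1) \<le> m"
  proof -
    have "N (m - 1) \<le> card (set ys)" unfolding N_def by (intro card_mono) auto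
    also have "\<dots> \<le> m" using ly card_length by metis
    finally show ?thesis .
  qed
  have exact: "N i = N 0 + i" if "i < m" for i
  proof -
    have a: "N 0 + i \<le> N i" "even (N i - N 0 - i)" using mono[of 0 i] that by auto
    have b: "N i + (m - 1 - i) \<le> N (m - 1)" using mono[of i "m - 1"] that by auto
    have "N i - N 0 - i \<le> 1" using a b top that by linarith
    moreover have "N i - N 0 - i \<noteq> 1" using a(2) by (metis odd_one)
    ultimately have "N i - N 0 - i = 0" by linarith
    thus ?thesis using a by linarith
  qed
  have c1: "N 0 \<le> 1" using exact[of "m - 1"] top False by auto
  have key: "ys ! j < xs ! i \<longleftrightarrow> j < N 0 + i" if "j < m" "i < m" for i j
    using sorted_count[OF sy, of j "xs ! i"] that ly exact[of i] unfolding N_def by simp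
  show ?thesis
  proof (cases "N 0 = 1")
    case True
    have "\<forall>i<length xs. ys ! i \<le> xs ! i \<and> (Suc i < length xs \<longrightarrow> xs ! i \<le> ys ! Suc i)"
    proof (intro allI impI conjI)
      fix i assume i: "i < length xs"
      show "ys ! i \<le> xs ! i" using key[of i i] i lx True by simp
      assume "Suc i < length xs"
      thus "xs ! i \<le> ys ! Suc i" using key[of "Suc i" i] lx True by (simp add: not_less[symmetric])
    qed
    thus ?thesis unfolding interlace_def using lx ly by simp
  next
    case False
    hence N0: "N 0 = 0" using c1 by simp
    have "\<forall>i<length xs. xs ! i \<le> ys ! i \<and> (Suc i < length xs \<longrightarrow> ys ! i \<le> xs ! Suc i)"
    proof (intro allI impI conjI)
      fix i assume i: "i < length xs"
      show "xs ! i \<le> ys ! i" using key[of i i] i lx N0 by (simp add: not_less[symmetric])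
      assume "Suc i < length xs"
      thus "ys ! i \<le> xs ! Suc i" using key[of i "Suc i"] lx N0 by simp
    qed
    thus ?thesis unfolding interlace_def using lx ly by simp
  qed
qed


lemma sorted_consec:
  fixes S :: "real set"
  assumes fin: "finite S" and xs: "xs = sorted_list_of_set S" and i: "Suc i < length xs"
  shows "xs ! i < xs ! Suc i \<and> (\<forall>r\<in>S. \<not> (xs ! i < r \<and> r < xs ! Suc i))"
proof -
  have s: "sorted_wrt (<) xs" using xs by (simp add: strict_sorted_list_of_set)
  have set: "set xs = S" using xs fin by simp
  have le: "xs ! k \<le> xs ! l" if "k \<le> l" "l < length xs" for k l
    using sorted_wrt_nth_less[OF s, of k l] that by (cases "k = l") auto
  have lt: "xs ! i < xs ! Suc i" using sorted_wrt_nth_less[OF s, of i "Suc i"] i by simp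
  have "\<not> (xs ! i < r \<and> r < xs ! Suc i)" if "r \<in> S" for r
  proof -
    have "r \<in> set xs" using that set by simp
    then obtain j where j: "j < length xs" "r = xs ! j" by (metis in_set_conv_nth)
    show ?thesis
    proof (cases "j \<le> i")
      case True thus ?thesis using le[of j i] j i by simp
    next
      case False thus ?thesis using le[of "Suc i" j] j by simp
    qed
  qed
  thus ?thesis using lt by blast
qed

lemma zero_notin_sym:
  fixes S :: "real set"
  assumes "finite S" "\<And>r. r \<in> S \<Longrightarrow> -r \<in> S" "even (card S)"
  shows "0 \<notin> S"
proof
  assume z: "0 \<in> S"
  have "card (S - {0}) = 2 * card {r\<in>S - {0}. 0 < r}"
    by (rule sym_card) (use assms in auto)
  moreover have "card S = Suc (card (S - {0}))" using card_Suc_Diff1[OF assms(1) z] by simp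
  ultimately show False using assms(3) by simp
qed

lemma zeros_pr: "finite R \<Longrightarrow> {x. poly (pr R) x = 0} = R"
  by (auto simp: poly_pr_zero)

context pfun
begin

lemma wt_pos:
  assumes A: "ops n A" and AR: "A = pr R" and fin: "finite R" and n: "n \<ge> 1" and a: "a \<in> R"
  shows "0 < wt R a"
proof -
  let ?q = "pr (R - {a})"
  have cR: "card R = n" using A AR fin unfolding ops_def by (simp add: degree_pr)
  have dq: "degree ?q = n - 1" using fin cR a by (simp add: degree_pr card_Diff_singleton)
  have "degree (?q * ?q) < 2 * n" using dq n pr_nz by (simp add: degree_mult_eq)
  hence "F (?q * ?q) = (\<Sum>b\<in>R. poly (?q * ?q) b * wt R b)" by (rule quadrature[OF A AR fin n])
  also have "\<dots> = poly (?q * ?q) a * wt R a + (\<Sum>b\<in>R-{a}. poly (?q * ?q) b * wt R b)"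
    by (rule sum.remove[OF fin a])
  also have "(\<Sum>b\<in>R-{a}. poly (?q * ?q) b * wt R b) = 0"
    by (rule sum.neutral) (use fin in \<open>auto simp: poly_pr_zero\<close>)
  finally have e: "F (?q * ?q) = (poly ?q a)^2 * wt R a" by (simp add: power2_eq_square)
  have "0 < F (?q * ?q)" using F_sq_pos pr_nz by blast
  hence "0 < (poly ?q a)^2 * wt R a" using e by simp
  moreover have "0 < (poly ?q a)^2" using fin by (simp add: poly_pr_zero)
  ultimately show ?thesis by (simp add: zero_less_mult_iff)
qed

lemma consec:
  assumes A: "ops n A" and AR: "A = pr R" and fin: "finite R" and n: "n \<ge> 2"
    and orth: "\<And>s. degree s \<le> n - 2 \<Longrightarrow> F (D * ([:0,1:] * s)) = 0"
    and dD: "degree D < n"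
    and a: "a \<in> R" and b: "b \<in> R" and ab: "a < b" and nb: "\<not> (\<exists>r\<in>R. a < r \<and> r < b)"
    and a0: "a \<noteq> 0" and b0: "b \<noteq> 0"
  shows "(poly D a = 0 \<longleftrightarrow> poly D b = 0) \<and> (0 < a \<longrightarrow> poly D a * poly D b \<le> 0)"
proof -
  let ?S = "R - {a, b}"
  let ?l = "pr ?S"
  define f where "f = D * ([:0,1:] * ?l)"
  have cR: "card R = n" using A AR fin unfolding ops_def by (simp add: degree_pr)
  have cS: "card ?S = n - 2" using cR a b ab fin by (simp add: card_Diff_subset)
  have finS: "finite ?S" using fin by simp
  have dl: "degree ?l = n - 2" using cS finS by (simp add: degree_pr)
  have F0: "F f = 0" unfolding f_def by (rule orth) (simp add: dl)
  have "degree f \<le> degree D + (degree [:0,1::real:] + degree ?l)"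
    unfolding f_def by (meson add_le_mono degree_mult_le le_refl order_trans)
  hence df: "degree f < 2 * n" using dD dl n by simp
  have "F f = (\<Sum>r\<in>R. poly f r * wt R r)" by (rule quadrature[OF A AR fin _ df]) (use n in simp)
  also have "\<dots> = (\<Sum>r\<in>R - {a,b}. poly f r * wt R r) + (\<Sum>r\<in>{a,b}. poly f r * wt R r)"
    by (rule sum.subset_diff) (use a b fin in auto)
  also have "(\<Sum>r\<in>R - {a,b}. poly f r * wt R r) = 0"
    by (rule sum.neutral) (use finS in \<open>auto simp: f_def poly_pr_zero\<close>)
  also have "(\<Sum>r\<in>{a,b}. poly f r * wt R r) = poly f a * wt R a + poly f b * wt R b"
    using ab by simp
  finally have eq: "poly D a * (a * poly ?l a * wt R a) + poly D b * (b * poly ?l b * wt R b) = 0"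
    using F0 by (simp add: f_def algebra_simps)
  have setseq: "{r\<in>?S. a < r} = {r\<in>?S. b < r}" using nb ab by force
  have sa: "0 < (-1) ^ card {r\<in>?S. a < r} * poly ?l a" by (rule sign_pr[OF finS]) simp
  have sb: "0 < (-1) ^ card {r\<in>?S. a < r} * poly ?l b" unfolding setseq by (rule sign_pr[OF finS]) simp
  have "0 < ((-1) ^ card {r\<in>?S. a < r} * poly ?l a) * ((-1) ^ card {r\<in>?S. a < r} * poly ?l b)"
    using sa sb by simp
  also have "\<dots> = ((-1) ^ card {r\<in>?S. a < r})^2 * (poly ?l a * poly ?l b)" by (simp add: power2_eq_square)
  also have "((-1::real) ^ card {r\<in>?S. a < r})^2 = 1" by (simp add: power_mult_distrib[symmetric] power_even_eq[symmetric])
  finally have ll: "0 < poly ?l a * poly ?l b" by simp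
  have wa: "0 < wt R a" by (rule wt_pos[OF A AR fin _ a]) (use n in simp)
  have wb: "0 < wt R b" by (rule wt_pos[OF A AR fin _ b]) (use n in simp)
  define u where "u = a * poly ?l a * wt R a"
  define v where "v = b * poly ?l b * wt R b"
  have la: "poly ?l a \<noteq> 0" "poly ?l b \<noteq> 0" using ll by auto
  have unz: "u \<noteq> 0" "v \<noteq> 0" unfolding u_def v_def using la wa wb a0 b0 by auto
  have e2: "poly D a * u = - (poly D b * v)" using eq unfolding u_def v_def by simp
  have p1: "poly D a = 0 \<longleftrightarrow> poly D b = 0" using e2 unz by auto
  have p2: "poly D a * poly D b \<le> 0" if "0 < a"
  proof -
    have "0 < u * v"
    proof -
      have "u * v = (a * b) * (poly ?l a * poly ?l b) * (wt R a * wt R b)"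
        unfolding u_def v_def by (simp add: ac_simps)
      moreover have "0 < a * b" using that ab by simp
      ultimately show ?thesis using ll wa wb by simp
    qed
    have "(poly D a * u) * (poly D b * v) = - ((poly D b * v) * (poly D b * v))" using e2 by simp
    hence "(poly D a * poly D b) * (u * v) = - ((poly D b * v) * (poly D b * v))" by (simp add: ac_simps)
    moreover have "0 \<le> (poly D b * v) * (poly D b * v)" by simp
    ultimately show ?thesis using \<open>0 < u * v\<close>
      by (smt (verit) mult_pos_pos)
  qed
  show ?thesis using p1 p2 by blast
qed

end

context pfun
begin

lemma even_interlace:
  assumes A: "ops n A" and ev: "even n" and n2: "n \<ge> 2"
    and BR: "B = pr RB" and finB: "finite RB" and cB: "card RB = n"
    and Bev: "\<And>x. poly B (-x) = poly B x"
    and orth: "\<And>s. degree s \<le> n - 2 \<Longrightarrow> F ((B - A) * ([:0,1:] * s)) = 0"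
  shows "interlace (pos_zeros A) (pos_zeros B)"
proof -
  obtain RA where RA: "finite RA" "card RA = n" "A = pr RA" using ops_roots[OF A] by blast
  have Aev: "poly A (-x) = poly A x" for x using ops_even[OF A, of x] ev by simp
  have symA: "-r \<in> RA" if "r \<in> RA" for r
  proof -
    have "poly A r = 0" using that RA by (simp add: poly_pr_zero)
    hence "poly A (-r) = 0" using Aev[of r] by simp
    thus ?thesis using RA poly_pr_zero by metis
  qed
  have symB: "-r \<in> RB" if "r \<in> RB" for r
  proof -
    have "poly B r = 0" using that BR finB by (simp add: poly_pr_zero)
    hence "poly B (-r) = 0" using Bev[of r] by simp
    thus ?thesis using BR finB poly_pr_zero by metis
  qed
  have A0: "0 \<notin> RA" by (rule zero_notin_sym) (use RA symA ev in auto)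
  have B0: "0 \<notin> RB" by (rule zero_notin_sym) (use finB cB symB ev in auto)
  define ZA where "ZA = {r\<in>RA. 0 < r}"
  define ZB where "ZB = {r\<in>RB. 0 < r}"
  define m where "m = n div 2"
  have cZA: "card ZA = m" using sym_card[OF RA(1) symA A0] RA(2) unfolding ZA_def m_def by simp
  have cZB: "card ZB = m" using sym_card[OF finB symB B0] cB unfolding ZB_def m_def by simp
  have finZA: "finite ZA" "finite ZB" using RA(1) finB unfolding ZA_def ZB_def by auto
  have pzA: "pos_zeros A = sorted_list_of_set ZA"
    unfolding pos_zeros_def ZA_def using RA by (simp add: poly_pr_zero conj_commute)
  have pzB: "pos_zeros B = sorted_list_of_set ZB"
    unfolding pos_zeros_def ZB_def using BR finB by (simp add: poly_pr_zero conj_commute)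
  define xs where "xs = sorted_list_of_set ZA"
  define ys where "ys = sorted_list_of_set ZB"
  have sx: "sorted_wrt (<) xs" "sorted_wrt (<) ys" unfolding xs_def ys_def by (simp_all add: strict_sorted_list_of_set)
  have lx: "length xs = m" "length ys = m" unfolding xs_def ys_def using cZA cZB finZA by simp_all
  have setx: "set xs = ZA" "set ys = ZB" unfolding xs_def ys_def using finZA by simp_all
  show ?thesis
  proof (cases "B = A")
    case True
    thus ?thesis using pzA by (simp add: interlace_refl)
  next
    case False
    define D where "D = B - A"
    have Dnz: "D \<noteq> 0" using False unfolding D_def by simp
    have degB: "degree B = n" "lead_coeff B = 1" using BR finB cB degree_pr lead_pr by metis+
    have degA: "degree A = n" "lead_coeff A = 1" using A unfolding ops_def by auto
    have "degree D \<le> n" using degA degB degree_diff_le_max[of B A] unfolding D_def by simp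
    moreover have "coeff D n = 0" using degA degB unfolding D_def by (metis coeff_diff diff_self)
    ultimately have dD: "degree D < n" using Dnz by (metis le_neq_implies_less leading_coeff_0_iff)
    have orthD: "\<And>s. degree s \<le> n - 2 \<Longrightarrow> F (D * ([:0,1:] * s)) = 0" unfolding D_def by (rule orth)
    have cons: "(poly D a = 0 \<longleftrightarrow> poly D b = 0) \<and> (0 < a \<longrightarrow> poly D a * poly D b \<le> 0)"
      if "a \<in> RA" "b \<in> RA" "a < b" "\<not> (\<exists>r\<in>RA. a < r \<and> r < b)" "a \<noteq> 0" "b \<noteq> 0" for a b
      by (rule consec[OF A RA(3) RA(1) n2 _ dD]) (use orthD that in auto)
    have allnz: "poly D r \<noteq> 0" if r: "r \<in> RA" for r
    proof -
      define ws where "ws = sorted_list_of_set RA"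
      have lw: "length ws = n" "set ws = RA" unfolding ws_def using RA by simp_all
      have step: "poly D (ws ! i) = 0 \<longleftrightarrow> poly D (ws ! Suc i) = 0" if i: "Suc i < n" for i
      proof -
        have c: "ws ! i < ws ! Suc i \<and> (\<forall>r\<in>RA. \<not> (ws ! i < r \<and> r < ws ! Suc i))"
          by (rule sorted_consec[OF RA(1) ws_def]) (use i lw in simp)
        have mem: "ws ! i \<in> RA" "ws ! Suc i \<in> RA" using lw i by (metis Suc_lessD nth_mem)+
        have nz: "ws ! i \<noteq> 0" "ws ! Suc i \<noteq> 0" using mem A0 by auto
        show ?thesis using cons[OF mem c[THEN conjunct1] _ nz] c by blast
      qed
      have all: "poly D (ws ! i) = 0 \<longleftrightarrow> poly D (ws ! 0) = 0" if "i < n" for i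
        using that
      proof (induction i)
        case 0 thus ?case by simp
      next
        case (Suc i) thus ?case using step[of i] by simp
      qed
      show ?thesis
      proof
        assume D0: "poly D r = 0"
        obtain i where i: "i < n" "r = ws ! i" using r lw by (metis in_set_conv_nth)
        have "poly D (ws ! 0) = 0" using all[OF i(1)] D0 i by simp
        hence "\<forall>r'\<in>RA. poly D r' = 0" using all lw by (metis in_set_conv_nth)
        hence "pr RA dvd D" using pr_dvd[OF RA(1)] by blast
        hence "degree (pr RA) \<le> degree D" using Dnz pr_nz by (intro dvd_imp_degree) auto
        thus False using dD RA by (simp add: degree_pr)
      qed
    qed
    have gap: "card {y\<in>set ys. y < xs ! i} < card {y\<in>set ys. y < xs ! Suc i}
        \<and> odd (card {y\<in>set ys. y < xs ! Suc i} - card {y\<in>set ys. y < xs ! i})" if i: "Suc i < m" for i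
    proof -
      define a where "a = xs ! i"
      define b where "b = xs ! Suc i"
      have c: "a < b \<and> (\<forall>r\<in>ZA. \<not> (a < r \<and> r < b))"
        unfolding a_def b_def by (rule sorted_consec[OF finZA(1) xs_def]) (use i lx in simp)
      have memZ: "a \<in> ZA" "b \<in> ZA" unfolding a_def b_def using setx lx i by (metis Suc_lessD nth_mem)+
      hence mem: "a \<in> RA" "b \<in> RA" "0 < a" "0 < b" unfolding ZA_def by auto
      have nb: "\<not> (\<exists>r\<in>RA. a < r \<and> r < b)" using c mem unfolding ZA_def by auto
      have "poly D a * poly D b \<le> 0" using cons[OF mem(1,2) c[THEN conjunct1] nb] mem by auto
      moreover have "poly D a \<noteq> 0" "poly D b \<noteq> 0" using allnz mem by auto
      ultimately have Dab: "poly D a * poly D b < 0" by (simp add: less_le)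
      have "poly A a = 0" "poly A b = 0" using mem RA by (simp_all add: poly_pr_zero)
      hence BD: "poly B a = poly D a" "poly B b = poly D b" unfolding D_def by simp_all
      have Bab: "poly B a * poly B b < 0" using Dab BD by simp
      have nRB: "a \<notin> RB" "b \<notin> RB" using BD \<open>poly D a \<noteq> 0\<close> \<open>poly D b \<noteq> 0\<close> BR finB poly_pr_zero
        by metis+
      define G where "G = {r\<in>RB. a < r \<and> r < b}"
      have finG: "finite G" using finB unfolding G_def by simp
      have U1: "{y\<in>ZB. y < b} = {y\<in>ZB. y < a} \<union> G"
      proof (rule set_eqI)
        fix x show "x \<in> {y\<in>ZB. y < b} \<longleftrightarrow> x \<in> {y\<in>ZB. y < a} \<union> G"
          using nRB c mem unfolding G_def ZB_def
          by (cases "x < a"; cases "x = a"; auto)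
      qed
      have D1: "{y\<in>ZB. y < a} \<inter> G = {}" unfolding G_def by auto
      have Nab: "card {y\<in>ZB. y < b} = card {y\<in>ZB. y < a} + card G"
        unfolding U1 by (rule card_Un_disjoint) (use finZA finG D1 in auto)
      have U2: "{r\<in>RB. a < r} = G \<union> {r\<in>RB. b < r}"
      proof (rule set_eqI)
        fix x show "x \<in> {r\<in>RB. a < r} \<longleftrightarrow> x \<in> G \<union> {r\<in>RB. b < r}"
          using nRB c unfolding G_def
          by (cases "x < b"; cases "x = b"; auto)
      qed
      have D2: "G \<inter> {r\<in>RB. b < r} = {}" unfolding G_def by auto
      have kab: "card {r\<in>RB. a < r} = card G + card {r\<in>RB. b < r}"
        unfolding U2 by (rule card_Un_disjoint) (use finB finG D2 in auto)
      have sa: "0 < (-1) ^ card {r\<in>RB. a < r} * poly B a" unfolding BR by (rule sign_pr[OF finB]) (use nRB BR in simp)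
      have sb: "0 < (-1) ^ card {r\<in>RB. b < r} * poly B b" unfolding BR by (rule sign_pr[OF finB]) (use nRB BR in simp)
      have oddG: "odd (card G)"
      proof
        assume eG: "even (card G)"
        let ?k = "card {r\<in>RB. b < r}"
        have "(-1::real) ^ card {r\<in>RB. a < r} = (-1) ^ ?k" unfolding kab using eG by (simp add: power_add)
        hence "0 < ((-1) ^ ?k * poly B a) * ((-1) ^ ?k * poly B b)" using sa sb by simp
        also have "\<dots> = ((-1::real) ^ ?k * (-1) ^ ?k) * (poly B a * poly B b)" by (simp add: ac_simps)
        also have "(-1::real) ^ ?k * (-1) ^ ?k = 1" by (simp add: power_add[symmetric])
        finally show False using Bab by simp
      qed
      hence "card G \<noteq> 0" by (metis even_zero)
      thus ?thesis using Nab oddG setx unfolding a_def b_def by simp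
    qed
    have "interlace xs ys" by (rule interlace_count[OF sx lx gap]) auto
    thus ?thesis using pzA pzB unfolding xs_def ys_def by simp
  qed
qed

end

lemma map_lin: "map_poly complex_of_real (lin r * p) = [:- complex_of_real r, 1:] * map_poly complex_of_real p"
  by (intro poly_eqI) (simp add: coeff_map_poly mult_pCons_left coeff_pCons split: nat.split)

lemma map_pr: "finite R \<Longrightarrow> map_poly complex_of_real (pr R) = (\<Prod>r\<in>R. [:- complex_of_real r, 1:])"
proof (induction R rule: finite_induct)
  case empty thus ?case by (simp add: pr_def)
next
  case (insert r R)
  have "map_poly complex_of_real (pr (insert r R)) = [:- complex_of_real r, 1:] * map_poly complex_of_real (pr R)"
    by (metis pr_insert[OF insert(1,2)] map_lin)
  also have "\<dots> = [:- complex_of_real r, 1:] * (\<Prod>r\<in>R. [:- complex_of_real r, 1:])"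
    by (simp only: insert(3))
  also have "\<dots> = (\<Prod>r\<in>insert r R. [:- complex_of_real r, 1:])"
    by (rule prod.insert[symmetric]) (use insert(1,2) in auto)
  finally show ?case .
qed

lemma complex_roots_pr:
  assumes fin: "finite R" and z: "poly (map_poly complex_of_real (pr R)) z = 0"
  shows "Im z = 0 \<and> order z (map_poly complex_of_real (pr R)) = 1"
proof -
  have e: "map_poly complex_of_real (pr R) = (\<Prod>r\<in>R. [:- complex_of_real r, 1:])" by (rule map_pr[OF fin])
  have "(\<Prod>r\<in>R. z - complex_of_real r) = 0" using z unfolding e by (simp add: poly_prod)
  then obtain r where r: "r \<in> R" "z = complex_of_real r" using fin by auto
  have Q: "(\<Prod>r\<in>R. [:- complex_of_real r, 1:]) = [:- z, 1:] * (\<Prod>r'\<in>R - {r}. [:- complex_of_real r', 1:])"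
    using r fin by (simp add: prod.remove)
  have pq: "poly (\<Prod>r'\<in>R - {r}. [:- complex_of_real r', 1:]) z \<noteq> 0"
    using r fin by (simp add: poly_prod)
  hence qnz: "(\<Prod>r'\<in>R - {r}. [:- complex_of_real r', 1:]) \<noteq> 0" by auto
  have o1: "order z [:- z, 1:] = 1" using order_power_n_n[of z 1] by simp
  have o0: "order z (\<Prod>r'\<in>R - {r}. [:- complex_of_real r', 1:]) = 0" using pq order_root by blast
  have nz: "[:- z, 1:] * (\<Prod>r'\<in>R - {r}. [:- complex_of_real r', 1:]) \<noteq> 0"
    by (metis mult_eq_0_iff pCons_eq_0_iff one_neq_zero qnz)
  have "order z (\<Prod>r\<in>R. [:- complex_of_real r, 1:]) = 1"
    unfolding Q order_mult[OF nz] o1 o0 by simp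
  thus ?thesis using r e by simp
qed

interpretation F0: pfun II
  by unfold_locales (auto simp: II_add II_smult II_pos II_refl)

theorem mainTheorem5:
  fixes lam1 :: real and P Q :: "nat \<Rightarrow> real poly"
  assumes "lam1 \<ge> 0"
    and "monic_OPS freud_ip P"
    and "monic_OPS (sobolev_ip lam1) Q"
  shows "(\<forall>n. \<forall>z::complex. poly (map_poly complex_of_real (Q n)) z = 0 \<longrightarrow>
              Im z = 0 \<and> order z (map_poly complex_of_real (Q n)) = 1)
       \<and> (\<forall>n\<ge>3. interlace (pos_zeros (P n)) (pos_zeros (Q n)))"
proof -
  define FL where "FL p = II p + lam1 * poly p 0" for p
  interpret FL: pfun FL
  proof
    fix p q :: "real poly" and c :: real
    show "FL (p + q) = FL p + FL q" unfolding FL_def by (simp add: II_add algebra_simps)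
    show "FL (smult c p) = c * FL p" unfolding FL_def by (simp add: II_smult algebra_simps)
    show "FL (pcompose p [:0,-1:]) = FL p" unfolding FL_def by (simp add: II_refl poly_pcompose)
  next
    fix p :: "real poly" assume "\<And>x. 0 \<le> poly p x" "p \<noteq> 0"
    thus "0 < FL p" unfolding FL_def using II_pos[of p] assms(1) by (smt (verit) mult_nonneg_nonneg)
  qed
  have fr: "freud_ip p q = II (p * q)" for p q unfolding freud_ip_def II_def by (simp add: ac_simps)
  have so: "sobolev_ip lam1 p q = FL (p * q)" for p q
    unfolding sobolev_ip_def FL_def fr by simp
  have opsP: "F0.ops n (P n)" for n using assms(2) unfolding monic_OPS_def F0.ops_def fr by blast
  have opsQ: "FL.ops n (Q n)" for n using assms(3) unfolding monic_OPS_def FL.ops_def so by blast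
  have part1: "\<forall>n. \<forall>z::complex. poly (map_poly complex_of_real (Q n)) z = 0 \<longrightarrow>
              Im z = 0 \<and> order z (map_poly complex_of_real (Q n)) = 1"
  proof (intro allI impI)
    fix n and z :: complex assume z: "poly (map_poly complex_of_real (Q n)) z = 0"
    obtain R where R: "finite R" "card R = n" "Q n = pr R" using FL.ops_roots[OF opsQ] by blast
    show "Im z = 0 \<and> order z (map_poly complex_of_real (Q n)) = 1"
      using complex_roots_pr[OF R(1)] z R(3) by simp
  qed
  have part2: "interlace (pos_zeros (P n)) (pos_zeros (Q n))" if n3: "n \<ge> 3" for n
  proof (cases "even n")
    case False
    have "poly (Q n) (-0) = (-1)^n * poly (Q n) 0" by (rule FL.ops_even[OF opsQ])
    hence Q0: "poly (Q n) 0 = 0" using False by simp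
    have "F0.ops n (Q n)" unfolding F0.ops_def
    proof (intro conjI allI impI)
      show "degree (Q n) = n" "lead_coeff (Q n) = 1" using opsQ unfolding FL.ops_def by blast+
      fix q :: "real poly" assume "degree q < n"
      hence "FL (Q n * q) = 0" using opsQ unfolding FL.ops_def by auto
      thus "II (Q n * q) = 0" unfolding FL_def using Q0 by simp
    qed
    hence "P n = Q n" using F0.ops_unique[OF opsP] by blast
    thus ?thesis by (simp add: interlace_refl pos_zeros_def)
  next
    case True
    obtain R where R: "finite R" "card R = n" "Q n = pr R" using FL.ops_roots[OF opsQ] by blast
    have Bev: "poly (Q n) (-x) = poly (Q n) x" for x using FL.ops_even[OF opsQ[of n], of x] True by simp
    have orth: "II ((Q n - P n) * ([:0,1:] * s)) = 0" if s: "degree s \<le> n - 2" for s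
    proof -
      have ds: "degree ([:0,1::real:] * s) < n"
        using degree_mult_le[of "[:0,1::real:]" s] s n3 by simp
      have o1: "\<forall>q. degree q < n \<longrightarrow> II (P n * q) = 0" using opsP[of n] unfolding F0.ops_def by blast
      have o2: "\<forall>q. degree q < n \<longrightarrow> FL (Q n * q) = 0" using opsQ[of n] unfolding FL.ops_def by blast
      have "II (P n * ([:0,1:] * s)) = 0" using o1 ds by blast
      moreover have "FL (Q n * ([:0,1:] * s)) = 0" using o2 ds by blast
      moreover have "poly (Q n * ([:0,1:] * s)) 0 = 0" by simp
      ultimately have "II (P n * ([:0,1:] * s)) = 0" "II (Q n * ([:0,1:] * s)) = 0" unfolding FL_def by simp_all
      moreover have "II ((Q n - P n) * ([:0,1:] * s)) = II (Q n * ([:0,1:] * s)) - II (P n * ([:0,1:] * s))"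
        by (simp only: left_diff_distrib F0.F_diff)
      ultimately show ?thesis by simp
    qed
    show ?thesis
      by (rule F0.even_interlace[OF opsP True _ R(3) R(1) R(2) Bev orth]) (use n3 in auto)
  qed
  show ?thesis using part1 part2 by blast
qed

end
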